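(* Let $G=(V,E)$ be a directed graph with $n=|V|$ and $A$ a node-weighting, and let $1\le\alpha\le\log n$. Suppose some $A$-respecting $h$-length symmetric demand $D$ has $h\cdot s$-length sparsity at most $\phi$ with respect to some $h\cdot s$-length moving cut $C$. Then the $\alpha$-exponential demand $D^{\alpha}_{h,A}$ has $\frac{h\cdot s}{2}$-length sparsity at most $2^{8\alpha+1}\phi$ with respect to the same cut $C$, i.e. $|C|/\mathrm{sep}_{hs/2}(C,D^\alpha_{h,A})\le 2^{8\alpha+1}\phi$.
   Context: $G$ has positive integer edge lengths $\ell(e)$ and capacities $u(e)$; $\mathrm{dist}(u,v)$ is the directed distance in $G$ and $\overline{\mathrm{dist}}(u,v)=\mathrm{dist}(u,v)+\mathrm{dist}(v,u)$. Node-weighting $A\ge0$; demand $D:V\times V\to\mathbb{R}_{\ge0}$, $|D|=\sum D(u,v)$; $A$-respecting: $\max\{\sum_wD(v,w),\sum_wD(w,v)\}\le A(v)$; $h$-length: $D(u,v)>0\Rightarrow\mathrm{dist}(u,v)\le h$; symmetric: $D(u,v)=D(v,u)$. An $H$-length moving cut is $C:E\to\{0,\tfrac1H,\dots\}\cap[0,1]$, $|C|=\sum_eu(e)C(e)$; $G-C$ has lengths $\ell(e)+H\cdot C(e)$; $\mathrm{sep}_{h'}(C,D)=\sum_{(u,v):\mathrm{dist}_{G-C}(u,v)>h'}D(u,v)$; $h'$-length sparsity $\mathrm{spars}_{h'}(C,D)=|C|/\mathrm{sep}_{h'}(C,D)$. Exponential weights (for $1\le\alpha\le\log n$): $w_h^\alpha(u,v)=1$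 if $u=v$; $=2^{-\alpha\overline{\mathrm{dist}}(u,v)/h}$ if $u\neq v$ and $\overline{\mathrm{dist}}(u,v)\le\frac{2h\log_2 n}{\alpha}$; $=0$ otherwise. $w_h^\alpha(u)=\sum_{b\in V}w_h^\alpha(u,b)$, $M_h^\alpha(u,v)=w_h^\alpha(u,v)/w_h^\alpha(u)$, and $D^\alpha_{h,A}(u,v)=A(u)M_h^\alpha(u,v)+A(v)M_h^\alpha(v,u)$. *)

theory Defs
  imports "HOL-Analysis.Analysis"
begin

definition lengraph :: "'a set \<Rightarrow> 'e set \<Rightarrow> ('e \<Rightarrow> 'a) \<Rightarrow> ('e \<Rightarrow> 'a)
    \<Rightarrow> ('e \<Rightarrow> nat) \<Rightarrow> ('e \<Rightarrow> nat) \<Rightarrow> bool" where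
  "lengraph V E src tgt ell cap \<longleftrightarrow> finite V \<and> finite E \<and>
     (\<forall>e\<in>E. src e \<in> V \<and> tgt e \<in> V \<and> ell e > 0 \<and> cap e > 0)"

fun walk :: "'e set \<Rightarrow> ('e \<Rightarrow> 'a) \<Rightarrow> ('e \<Rightarrow> 'a) \<Rightarrow> 'a \<Rightarrow> 'e list \<Rightarrow> 'a \<Rightarrow> bool" where
  "walk E src tgt x [] y \<longleftrightarrow> x = y"
| "walk E src tgt x (e # es) y \<longleftrightarrow> e \<in> E \<and> src e = x \<and> walk E src tgt (tgt e) es y"

text \<open>Directed distance w.r.t. edge lengths len (\<infinity> if unreachable).\<close>
definition gdist :: "'e set \<Rightarrow> ('e \<Rightarrow> 'a) \<Rightarrow> ('e \<Rightarrow> 'a) \<Rightarrow> ('e \<Rightarrow> real) \<Rightarrow> 'a \<Rightarrow> 'a \<Rightarrow> ereal" where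
  "gdist E src tgt len x y = (INF es \<in> {es. walk E src tgt x es y}. ereal (sum_list (map len es)))"

definition gdistbar :: "'e set \<Rightarrow> ('e \<Rightarrow> 'a) \<Rightarrow> ('e \<Rightarrow> 'a) \<Rightarrow> ('e \<Rightarrow> real) \<Rightarrow> 'a \<Rightarrow> 'a \<Rightarrow> ereal" where
  "gdistbar E src tgt len x y = gdist E src tgt len x y + gdist E src tgt len y x"

definition A_respecting :: "'a set \<Rightarrow> ('a \<Rightarrow> real) \<Rightarrow> ('a \<Rightarrow> 'a \<Rightarrow> real) \<Rightarrow> bool" where
  "A_respecting V A D \<longleftrightarrow> (\<forall>v\<in>V. max (\<Sum>w\<in>V. D v w) (\<Sum>w\<in>V. D w v) \<le> A v)"

definition is_demand :: "'a set \<Rightarrow> ('a \<Rightarrow> 'a \<Rightarrow> real) \<Rightarrow> bool" where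
  "is_demand V D \<longleftrightarrow> (\<forall>x y. D x y \<ge> 0) \<and> (\<forall>x y. D x y \<noteq> 0 \<longrightarrow> x \<in> V \<and> y \<in> V)"

definition h_length_demand :: "'e set \<Rightarrow> ('e \<Rightarrow> 'a) \<Rightarrow> ('e \<Rightarrow> 'a) \<Rightarrow> ('e \<Rightarrow> nat)
    \<Rightarrow> real \<Rightarrow> ('a \<Rightarrow> 'a \<Rightarrow> real) \<Rightarrow> bool" where
  "h_length_demand E src tgt ell h D \<longleftrightarrow>
     (\<forall>x y. D x y > 0 \<longrightarrow> gdist E src tgt (\<lambda>e. real (ell e)) x y \<le> ereal h)"

definition symmetric_demand :: "('a \<Rightarrow> 'a \<Rightarrow> real) \<Rightarrow> bool" where
  "symmetric_demand D \<longleftrightarrow> (\<forall>x y. D x y = D y x)"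

definition moving_cut :: "'e set \<Rightarrow> real \<Rightarrow> ('e \<Rightarrow> real) \<Rightarrow> bool" where
  "moving_cut E H C \<longleftrightarrow> (\<forall>e\<in>E. (\<exists>k::nat. C e = real k / H) \<and> 0 \<le> C e \<and> C e \<le> 1)"

definition cut_size :: "'e set \<Rightarrow> ('e \<Rightarrow> nat) \<Rightarrow> ('e \<Rightarrow> real) \<Rightarrow> real" where
  "cut_size E cap C = (\<Sum>e\<in>E. real (cap e) * C e)"

definition cut_len :: "('e \<Rightarrow> nat) \<Rightarrow> real \<Rightarrow> ('e \<Rightarrow> real) \<Rightarrow> 'e \<Rightarrow> real" where
  "cut_len ell H C e = real (ell e) + H * C e"

definition sep :: "'a set \<Rightarrow> 'e set \<Rightarrow> ('e \<Rightarrow> 'a) \<Rightarrow> ('e \<Rightarrow> 'a) \<Rightarrow> ('e \<Rightarrow> nat)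
    \<Rightarrow> real \<Rightarrow> ('e \<Rightarrow> real) \<Rightarrow> real \<Rightarrow> ('a \<Rightarrow> 'a \<Rightarrow> real) \<Rightarrow> real" where
  "sep V E src tgt ell H C h' D =
     (\<Sum>p\<in>{(x,y) \<in> V \<times> V. gdist E src tgt (cut_len ell H C) x y > ereal h'}. D (fst p) (snd p))"

definition spars :: "'a set \<Rightarrow> 'e set \<Rightarrow> ('e \<Rightarrow> 'a) \<Rightarrow> ('e \<Rightarrow> 'a) \<Rightarrow> ('e \<Rightarrow> nat) \<Rightarrow> ('e \<Rightarrow> nat)
    \<Rightarrow> real \<Rightarrow> ('e \<Rightarrow> real) \<Rightarrow> real \<Rightarrow> ('a \<Rightarrow> 'a \<Rightarrow> real) \<Rightarrow> ereal" where
  "spars V E src tgt ell cap H C h' D =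
     (let s = sep V E src tgt ell H C h' D in
      if s = 0 then \<infinity> else ereal (cut_size E cap C / s))"

definition expw :: "'a set \<Rightarrow> 'e set \<Rightarrow> ('e \<Rightarrow> 'a) \<Rightarrow> ('e \<Rightarrow> 'a) \<Rightarrow> ('e \<Rightarrow> nat)
    \<Rightarrow> real \<Rightarrow> real \<Rightarrow> 'a \<Rightarrow> 'a \<Rightarrow> real" where
  "expw V E src tgt ell h \<alpha> x y =
     (let d = gdistbar E src tgt (\<lambda>e. real (ell e)) x y in
      if x = y then 1
      else if d \<le> ereal (2 * h * log 2 (real (card V)) / \<alpha>)
        then 2 powr (- \<alpha> * real_of_ereal d / h)
      else 0)"

definition expw_node :: "'a set \<Rightarrow> 'e set \<Rightarrow> ('e \<Rightarrow> 'a) \<Rightarrow> ('e \<Rightarrow> 'a) \<Rightarrow> ('e \<Rightarrow> nat)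
    \<Rightarrow> real \<Rightarrow> real \<Rightarrow> 'a \<Rightarrow> real" where
  "expw_node V E src tgt ell h \<alpha> x = (\<Sum>b\<in>V. expw V E src tgt ell h \<alpha> x b)"

definition expM :: "'a set \<Rightarrow> 'e set \<Rightarrow> ('e \<Rightarrow> 'a) \<Rightarrow> ('e \<Rightarrow> 'a) \<Rightarrow> ('e \<Rightarrow> nat)
    \<Rightarrow> real \<Rightarrow> real \<Rightarrow> 'a \<Rightarrow> 'a \<Rightarrow> real" where
  "expM V E src tgt ell h \<alpha> x y = expw V E src tgt ell h \<alpha> x y / expw_node V E src tgt ell h \<alpha> x"

definition exp_demand :: "'a set \<Rightarrow> 'e set \<Rightarrow> ('e \<Rightarrow> 'a) \<Rightarrow> ('e \<Rightarrow> 'a) \<Rightarrow> ('e \<Rightarrow> nat)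
    \<Rightarrow> real \<Rightarrow> real \<Rightarrow> ('a \<Rightarrow> real) \<Rightarrow> 'a \<Rightarrow> 'a \<Rightarrow> real" where
  "exp_demand V E src tgt ell h \<alpha> A x y =
     A x * expM V E src tgt ell h \<alpha> x y + A y * expM V E src tgt ell h \<alpha> y x"

end

theory Submission imports Defs begin

lemma walk_append: "walk E s t x (p @ q) z \<longleftrightarrow> (\<exists>y. walk E s t x p y \<and> walk E s t y q z)"
  by (induction p arbitrary: x) auto

lemma walk_edges: "walk E s t x p y \<Longrightarrow> set p \<subseteq> E"
  by (induction p arbitrary: x) auto

lemma gdist_nonneg:
  assumes "\<forall>e\<in>E. len e \<ge> 0"
  shows "0 \<le> gdist E s t len x y"
  unfolding gdist_def
proof (rule INF_greatest)
  fix es assume "es \<in> {es. walk E s t x es y}"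
  then have "set es \<subseteq> E" by (simp add: walk_edges)
  then have "0 \<le> sum_list (map len es)" using assms by (intro sum_list_nonneg) auto
  then show "0 \<le> ereal (sum_list (map len es))" by simp
qed

lemma gdist_walk: "walk E s t x p y \<Longrightarrow> gdist E s t len x y \<le> ereal (sum_list (map len p))"
  unfolding gdist_def by (rule INF_lower) auto

lemma gdist_refl: "gdist E s t len x x = 0" if "\<forall>e\<in>E. len e \<ge> 0"
  using gdist_walk[of E s t x "[]" x len] gdist_nonneg[OF that, of s t x x] by (simp add: zero_ereal_def)

lemma gdist_triangle:
  assumes nn: "\<forall>e\<in>E. len e \<ge> 0"
  shows "gdist E s t len x z \<le> gdist E s t len x y + gdist E s t len y z"
proof -
  let ?d = "gdist E s t len"
  have n1: "?d x y \<ge> 0" "?d y z \<ge> 0" by (rule gdist_nonneg[OF nn])+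
  show ?thesis
  proof (cases "?d x y = \<infinity> \<or> ?d y z = \<infinity>")
    case True then show ?thesis using n1 by auto
  next
    case False
    then obtain a b where ab: "?d x y = ereal a" "?d y z = ereal b"
      using n1 by (cases "?d x y"; cases "?d y z") auto
    show ?thesis
    proof (rule ereal_le_epsilon2)
      fix e :: real assume e: "0 < e"
      have "?d x y < ereal (a + e/2)" using ab e by simp
      then obtain p where p: "walk E s t x p y" "ereal (sum_list (map len p)) < ereal (a + e/2)"
        unfolding gdist_def by (auto simp: INF_less_iff)
      have "?d y z < ereal (b + e/2)" using ab e by simp
      then obtain q where q: "walk E s t y q z" "ereal (sum_list (map len q)) < ereal (b + e/2)"
        unfolding gdist_def by (auto simp: INF_less_iff)
      have "walk E s t x (p @ q) z" using p q walk_append by metis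
      then have "?d x z \<le> ereal (sum_list (map len (p @ q)))" by (rule gdist_walk)
      also have "\<dots> \<le> ereal (a + b + e)" using p(2) q(2) by simp
      finally show "?d x z \<le> ?d x y + ?d y z + ereal e" using ab by simp
    qed
  qed
qed


lemma ereal_bounded_real:
  fixes d :: ereal
  assumes "0 \<le> d" "d \<le> ereal c"
  obtains r where "d = ereal r" "0 \<le> r" "r \<le> c"
  using assms by (cases d) auto

context
  fixes V :: "'a set" and E :: "'e set" and src tgt :: "'e \<Rightarrow> 'a" and ell :: "'e \<Rightarrow> nat"
    and h \<alpha> :: real
  assumes fin: "finite V" and hpos: "h > 0" and a1: "1 \<le> \<alpha>" and a2: "\<alpha> \<le> log 2 (real (card V))"
begin

abbreviation "db \<equiv> gdistbar E src tgt (\<lambda>e. real (ell e))"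
abbreviation "w \<equiv> expw V E src tgt ell h \<alpha>"
abbreviation "wn \<equiv> expw_node V E src tgt ell h \<alpha>"
abbreviation "LL \<equiv> 2 * h * log 2 (real (card V)) / \<alpha>"
abbreviation "KK \<equiv> (2::real) powr (2 * \<alpha>)"

lemma n_ge2: "real (card V) \<ge> 2"
proof (cases "card V = 0")
  case True then show ?thesis using a1 a2 by (simp add: log_def)
next
  case False
  then have "1 \<le> log 2 (real (card V))" using a1 a2 by linarith
  then show ?thesis using False by (simp add: le_log_iff)
qed

lemma lennn: "\<forall>e\<in>E. 0 \<le> real (ell e)" by simp

lemma db_nonneg: "0 \<le> db x y"
  unfolding gdistbar_def using gdist_nonneg[OF lennn, of src tgt x y] gdist_nonneg[OF lennn, of src tgt y x] by (simp add: add_nonneg_nonneg)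

lemma db_refl: "db x x = 0"
  unfolding gdistbar_def using gdist_refl[OF lennn, of src tgt x] by simp

lemma db_sym: "db x y = db y x"
  unfolding gdistbar_def by (simp add: add.commute)

lemma db_tri: "db x z \<le> db x y + db y z"
proof -
  let ?d = "gdist E src tgt (\<lambda>e. real (ell e))"
  have "?d x z + ?d z x \<le> (?d x y + ?d y z) + (?d z y + ?d y x)"
    by (intro add_mono gdist_triangle[OF lennn])
  also have "\<dots> = (?d x y + ?d y x) + (?d y z + ?d z y)" by (simp add: ac_simps)
  finally show ?thesis unfolding gdistbar_def .
qed

lemma L_ge: "2 * h \<le> LL"
proof -
  have "1 \<le> log 2 (real (card V)) / \<alpha>" using a1 a2 by simp
  then have "2 * h * 1 \<le> 2 * h * (log 2 (real (card V)) / \<alpha>)" using hpos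
    by (intro mult_left_mono) auto
  then show ?thesis by simp
qed

lemma K_ge: "KK \<ge> 4"
proof -
  have "(2::real) powr 2 \<le> 2 powr (2 * \<alpha>)" using a1 by (intro powr_mono) auto
  then show ?thesis by simp
qed

lemma w_self: "w x x = 1"
  unfolding expw_def by (simp add: Let_def)

lemma w_eq: "x \<noteq> y \<Longrightarrow> db x y \<le> ereal LL \<Longrightarrow> w x y = 2 powr (- \<alpha> * real_of_ereal (db x y) / h)"
  unfolding expw_def by (simp add: Let_def)

lemma w_zero: "x \<noteq> y \<Longrightarrow> \<not> db x y \<le> ereal LL \<Longrightarrow> w x y = 0"
  unfolding expw_def by (simp add: Let_def)

lemma w_nonneg: "0 \<le> w x y"
  unfolding expw_def by (simp add: Let_def)

lemma w_le1: "w x y \<le> 1"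
proof -
  have "0 \<le> real_of_ereal (db x y)" using db_nonneg by (simp add: real_of_ereal_pos)
  then have "- \<alpha> * real_of_ereal (db x y) / h \<le> 0" using a1 hpos
    by (simp add: divide_nonpos_pos mult_nonneg_nonneg)
  then have "(2::real) powr (- \<alpha> * real_of_ereal (db x y) / h) \<le> 2 powr 0"
    by (intro powr_mono) auto
  then show ?thesis unfolding expw_def by (simp add: Let_def)
qed

lemma w_lower: assumes "db x y \<le> ereal (2 * h)" shows "w x y \<ge> 1 / KK"
proof (cases "x = y")
  case True then show ?thesis using w_self K_ge by simp
next
  case False
  obtain r where r: "db x y = ereal r" "0 \<le> r" "r \<le> 2 * h"
    using ereal_bounded_real[OF db_nonneg assms] by blast
  have "db x y \<le> ereal LL" using assms L_ge order_trans by fastforce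
  then have "w x y = 2 powr (- \<alpha> * r / h)" using w_eq[OF False] r by simp
  moreover have "- (2 * \<alpha>) \<le> - \<alpha> * r / h"
  proof -
    have "\<alpha> * r \<le> \<alpha> * (2 * h)" using r a1 by (intro mult_left_mono) auto
    then have "\<alpha> * r / h \<le> 2 * \<alpha>" using hpos by (simp add: divide_le_eq)
    then show ?thesis by simp
  qed
  then have "(2::real) powr (- (2 * \<alpha>)) \<le> 2 powr (- \<alpha> * r / h)" by (intro powr_mono) auto
  ultimately show ?thesis by (simp add: powr_minus divide_inverse)
qed

lemma key: assumes uv: "db u v \<le> ereal (2 * h)"
  shows "w v b \<le> KK * w u b + KK / (real (card V))^2"
proof -
  have Kge1: "KK \<ge> 1" using K_ge by simp
  have extra: "0 \<le> KK / (real (card V))^2" by simp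
  have wub: "0 \<le> KK * w u b" using w_nonneg by simp
  show ?thesis
  proof (cases "v = b")
    case True
    show ?thesis
    proof (cases "u = v")
      case True
      then have "w v b = 1" "w u b = 1" using \<open>v = b\<close> w_self by auto
      then show ?thesis using Kge1 extra by (simp del: divide_nonneg_nonneg zero_le_divide_iff)
    next
      case False
      have "1 / KK \<le> w u v" by (rule w_lower[OF uv])
      then have "1 \<le> KK * w u v" using K_ge by (simp add: divide_le_eq mult.commute)
      then have "1 \<le> KK * w u b" using \<open>v = b\<close> by simp
      moreover have "w v b = 1" using \<open>v = b\<close> w_self by simp
      ultimately show ?thesis using extra by linarith
    qed
  next
    case vb: False
    show ?thesis
    proof (cases "db v b \<le> ereal LL")
      case False then show ?thesis using w_zero[OF vb] wub extra by simp
    next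
      case True
      obtain rvb where rvb: "db v b = ereal rvb" "0 \<le> rvb" "rvb \<le> LL"
        using ereal_bounded_real[OF db_nonneg True] by blast
      have wvb: "w v b = 2 powr (- \<alpha> * rvb / h)" using w_eq[OF vb True] rvb by simp
      show ?thesis
      proof (cases "u = b")
        case True
        then have "KK * w u b = KK" using w_self by simp
        then show ?thesis using w_le1[of v b] Kge1 extra by linarith
      next
        case ub: False
        have "db u b \<le> db u v + db v b" by (rule db_tri)
        also have "\<dots> \<le> ereal (2 * h) + ereal rvb" using uv rvb by (intro add_mono) auto
        finally have dub: "db u b \<le> ereal (2 * h + rvb)" by simp
        show ?thesis
        proof (cases "db u b \<le> ereal LL")
          case True
          obtain rub where rub: "db u b = ereal rub" "0 \<le> rub" "rub \<le> LL"
            using ereal_bounded_real[OF db_nonneg True] by blast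
          have wub': "w u b = 2 powr (- \<alpha> * rub / h)" using w_eq[OF ub True] rub by simp
          have "rub \<le> 2 * h + rvb" using dub rub by simp
          then have "\<alpha> * rub \<le> \<alpha> * (2 * h + rvb)" using a1 by (intro mult_left_mono) auto
          then have "- \<alpha> * (2 * h + rvb) / h \<le> - \<alpha> * rub / h" using hpos
            by (simp add: divide_right_mono)
          then have "(2::real) powr (- \<alpha> * (2 * h + rvb) / h) \<le> w u b"
            unfolding wub' by (intro powr_mono) auto
          moreover have "- \<alpha> * (2 * h + rvb) / h = - (2 * \<alpha>) + (- \<alpha> * rvb / h)"
            using hpos by (simp add: field_simps)
          then have "(2::real) powr (- (2 * \<alpha>)) * 2 powr (- \<alpha> * rvb / h) = 2 powr (- \<alpha> * (2 * h + rvb) / h)"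
            by (simp only: powr_add[symmetric])
          ultimately have "2 powr (- (2 * \<alpha>)) * w v b \<le> w u b"
            unfolding wvb by simp
          then have "w v b \<le> KK * w u b" by (simp add: powr_minus field_simps)
          then show ?thesis using extra by linarith
        next
          case False
          then have "ereal LL < ereal (2 * h + rvb)" using dub by (meson not_le order_less_le_trans)
          then have lt: "LL - 2 * h < rvb" by simp
          have "\<alpha> * (LL - 2 * h) / h = 2 * log 2 (real (card V)) - 2 * \<alpha>"
            using hpos a1 by (simp add: field_simps)
          moreover have "\<alpha> * (LL - 2 * h) / h \<le> \<alpha> * rvb / h"
            using lt a1 hpos by (intro divide_right_mono mult_left_mono) auto
          ultimately have "- \<alpha> * rvb / h \<le> 2 * \<alpha> - 2 * log 2 (real (card V))" by simp
          then have "w v b \<le> 2 powr (2 * \<alpha> - 2 * log 2 (real (card V)))"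
            unfolding wvb by (intro powr_mono) auto
          also have "\<dots> = KK / (2 powr (log 2 (real (card V)))) powr 2"
            by (simp add: powr_diff powr_powr mult.commute)
          also have "\<dots> = KK / (real (card V))^2"
            using n_ge2 by (simp add: powr_numeral)
          finally show ?thesis using wub by simp
        qed
      qed
    qed
  qed
qed

lemma wn_ge1: assumes "x \<in> V" shows "wn x \<ge> 1"
proof -
  have "w x x \<le> sum (w x) V" using assms fin w_nonneg by (intro member_le_sum) auto
  then show ?thesis unfolding expw_node_def using w_self by simp
qed

lemma wn_comp: assumes "u \<in> V" "v \<in> V" "db u v \<le> ereal (2 * h)"
  shows "wn v \<le> 2 * KK * wn u"
proof -
  let ?N = "real (card V)"
  have "wn v \<le> (\<Sum>b\<in>V. KK * w u b + KK / ?N^2)"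
    unfolding expw_node_def by (intro sum_mono key[OF assms(3)])
  also have "\<dots> = KK * wn u + ?N * (KK / ?N^2)"
    unfolding expw_node_def by (simp add: sum.distrib sum_distrib_left)
  also have "?N * (KK / ?N^2) = KK / ?N" using n_ge2 by (simp add: power2_eq_square)
  finally have 1: "wn v \<le> KK * wn u + KK / ?N" .
  have 2: "KK / ?N \<le> KK" using n_ge2 K_ge by (simp add: divide_le_eq)
  have 3: "KK \<le> KK * wn u" using wn_ge1[OF assms(1)] K_ge by simp
  from 1 2 3 show ?thesis by linarith
qed

lemma min_sum: assumes "u \<in> V" "v \<in> V" "db u v \<le> ereal (2 * h)"
  shows "(\<Sum>b\<in>V. min (w u b) (w v b)) \<ge> wn u / KK^2"
proof -
  let ?N = "real (card V)"
  have vu: "db v u \<le> ereal (2 * h)" using assms(3) db_sym by simp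
  have Kpos: "KK > 0" "KK \<ge> 4" using K_ge by auto
  have each: "w u b / KK - 1 / ?N^2 \<le> min (w u b) (w v b)" for b
  proof -
    have "w u b \<le> KK * w v b + KK / ?N^2" by (rule key[OF vu])
    then have "w u b / KK \<le> w v b + 1 / ?N^2" using Kpos by (simp add: divide_le_eq algebra_simps)
    moreover have "w u b / KK \<le> w u b" using Kpos w_nonneg[of u b]
      by (simp add: divide_le_eq mult_le_cancel_left1)
    moreover have "0 \<le> 1 / ?N^2" by simp
    ultimately show ?thesis by linarith
  qed
  have "(\<Sum>b\<in>V. w u b / KK - 1 / ?N^2) \<le> (\<Sum>b\<in>V. min (w u b) (w v b))"
    by (intro sum_mono each)
  moreover have "(\<Sum>b\<in>V. w u b / KK - 1 / ?N^2) = wn u / KK - 1 / ?N"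
    unfolding expw_node_def using n_ge2 by (simp add: sum_subtractf sum_divide_distrib power2_eq_square)
  ultimately have s1: "wn u / KK - 1 / ?N \<le> (\<Sum>b\<in>V. min (w u b) (w v b))" by simp
  show ?thesis
  proof (cases "wn u \<ge> 2 * KK / ?N")
    case True
    then have "1 / ?N \<le> wn u / (2 * KK)" using Kpos n_ge2 by (simp add: field_simps)
    then have "wn u / (2 * KK) \<le> wn u / KK - 1 / ?N" by (simp add: field_simps)
    moreover have "wn u / KK^2 \<le> wn u / (2 * KK)" using Kpos wn_ge1[OF assms(1)]
      by (intro divide_left_mono) (auto simp: power2_eq_square)
    ultimately show ?thesis using s1 by linarith
  next
    case False
    then have "?N * wn u < 2 * KK" using n_ge2 Kpos by (simp add: field_simps)
    moreover have "2 * wn u \<le> ?N * wn u" using n_ge2 wn_ge1[OF assms(1)] by (intro mult_right_mono) auto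
    ultimately have "wn u \<le> KK" by linarith
    then have a: "wn u / KK^2 \<le> 1 / KK" using Kpos by (simp add: power2_eq_square field_simps)
    have "1 / KK \<le> min (w u u) (w v u)" using w_lower[OF vu] w_self Kpos by simp
    also have "\<dots> \<le> (\<Sum>b\<in>V. min (w u b) (w v b))"
      using assms(1) fin w_nonneg by (intro member_le_sum) auto
    finally show ?thesis using a by linarith
  qed
qed

lemma M_sum: assumes "u \<in> V" "v \<in> V" "db u v \<le> ereal (2 * h)"
  shows "(\<Sum>b\<in>V. min (expM V E src tgt ell h \<alpha> u b) (expM V E src tgt ell h \<alpha> v b)) \<ge> 1 / (2 * KK^3)"
proof -
  have Kpos: "KK > 0" using K_ge by auto
  have wu: "wn u \<ge> 1" "wn v \<ge> 1" using wn_ge1 assms by auto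
  have vu: "db v u \<le> ereal (2 * h)" using assms(3) db_sym by simp
  let ?c = "2 * KK * wn u"
  have cpos: "?c > 0" using Kpos wu by simp
  have each: "min (w u b) (w v b) / ?c \<le> min (expM V E src tgt ell h \<alpha> u b) (expM V E src tgt ell h \<alpha> v b)" for b
  proof -
    have "w u b / ?c \<le> w u b / wn u" using wu Kpos K_ge w_nonneg[of u b]
      by (intro divide_left_mono) auto
    moreover have "w v b / ?c \<le> w v b / wn v" using wu cpos w_nonneg[of v b] wn_comp[OF assms]
      by (intro divide_left_mono) auto
    then have "min (w u b / ?c) (w v b / ?c) \<le> min (w u b / wn u) (w v b / wn v)"
      using \<open>w u b / ?c \<le> w u b / wn u\<close> by (intro min.mono)
    then show ?thesis unfolding expM_def
      by (simp add: min_divide_distrib_right cpos less_imp_le)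
  qed
  have "(\<Sum>b\<in>V. min (w u b) (w v b)) / ?c \<le> (\<Sum>b\<in>V. min (expM V E src tgt ell h \<alpha> u b) (expM V E src tgt ell h \<alpha> v b))"
    unfolding sum_divide_distrib by (intro sum_mono each)
  moreover have "(wn u / KK^2) / ?c \<le> (\<Sum>b\<in>V. min (w u b) (w v b)) / ?c"
    using min_sum[OF assms] cpos by (intro divide_right_mono) auto
  moreover have "(wn u / KK^2) / ?c = 1 / (2 * KK^3)" using wu Kpos
    by (simp add: field_simps power2_eq_square power3_eq_cube)
  ultimately show ?thesis by linarith
qed

lemma M_nonneg: "0 \<le> expM V E src tgt ell h \<alpha> x y"
  unfolding expM_def expw_node_def using w_nonneg by (intro divide_nonneg_nonneg sum_nonneg) auto

end

lemma sep_alt: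
  assumes "finite V"
  shows "sep V E src tgt ell H C h' D =
    (\<Sum>x\<in>V. \<Sum>y\<in>V. if gdist E src tgt (cut_len ell H C) x y > ereal h' then D x y else 0)"
proof -
  let ?Q = "\<lambda>x y. gdist E src tgt (cut_len ell H C) x y > ereal h'"
  have "{(x,y) \<in> V \<times> V. ?Q x y} = {p \<in> V \<times> V. ?Q (fst p) (snd p)}" by auto
  then have "sep V E src tgt ell H C h' D = (\<Sum>p\<in>V \<times> V. if ?Q (fst p) (snd p) then D (fst p) (snd p) else 0)"
    unfolding sep_def using assms by (simp add: sum.inter_filter)
  also have "\<dots> = (\<Sum>x\<in>V. \<Sum>y\<in>V. if ?Q x y then D x y else 0)"
    by (simp add: sum.cartesian_product split_beta)
  finally show ?thesis .
qed

theorem lemma3p10: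
  fixes V :: "'a set" and E :: "'e set" and src tgt :: "'e \<Rightarrow> 'a"
    and ell cap :: "'e \<Rightarrow> nat" and A :: "'a \<Rightarrow> real"
    and D :: "'a \<Rightarrow> 'a \<Rightarrow> real" and C :: "'e \<Rightarrow> real"
    and h s \<alpha> \<phi> :: real
  assumes G: "lengraph V E src tgt ell cap"
    and A_nonneg: "\<forall>v\<in>V. A v \<ge> 0"
    and h_pos: "h > 0" and s_pos: "s > 0"
    and alpha: "1 \<le> \<alpha>" "\<alpha> \<le> log 2 (real (card V))"
    and D_dem: "is_demand V D"
    and D_resp: "A_respecting V A D"
    and D_len: "h_length_demand E src tgt ell h D"
    and D_sym: "symmetric_demand D"
    and C_cut: "moving_cut E (h * s) C"
    and spars_D: "spars V E src tgt ell cap (h * s) C (h * s) D \<le> ereal \<phi>"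
  shows "spars V E src tgt ell cap (h * s) C (h * s / 2) (exp_demand V E src tgt ell h \<alpha> A)
           \<le> ereal (2 powr (8 * \<alpha> + 1) * \<phi>)"
proof -
  have fin: "finite V" and finE: "finite E" using G unfolding lengraph_def by auto
  let ?dC = "gdist E src tgt (cut_len ell (h * s) C)"
  let ?M = "expM V E src tgt ell h \<alpha>"
  let ?DA = "exp_demand V E src tgt ell h \<alpha> A"
  define I where "I x y = (if ?dC x y > ereal (h * s / 2) then 1 else (0::real))" for x y
  define K3 where "K3 = 2 * ((2::real) powr (2 * \<alpha>))^3"
  have K3pos: "K3 > 0" unfolding K3_def by simp
  have cutnn: "\<forall>e\<in>E. 0 \<le> cut_len ell (h * s) C e"
    using C_cut h_pos s_pos unfolding moving_cut_def cut_len_def by auto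
  have Mnn: "0 \<le> ?M x y" for x y using M_nonneg[OF fin h_pos alpha] .
  have Inn: "0 \<le> I x y" for x y unfolding I_def by simp
  have Dnn: "0 \<le> D x y" for x y using D_dem unfolding is_demand_def by auto
  define S1 where "S1 = (\<Sum>u\<in>V. \<Sum>v\<in>V. \<Sum>b\<in>V. D u v * (?M u b * I u b))"
  define S2 where "S2 = (\<Sum>u\<in>V. \<Sum>v\<in>V. \<Sum>b\<in>V. D u v * (?M v b * I b v))"
  define SD where "SD = sep V E src tgt ell (h * s) C (h * s) D"
  define SA where "SA = sep V E src tgt ell (h * s) C (h * s / 2) ?DA"
  have step1: "(if ?dC u v > ereal (h * s) then D u v else 0)
      \<le> K3 * (\<Sum>b\<in>V. D u v * (?M u b * I u b) + D u v * (?M v b * I b v))"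
    if uv: "u \<in> V" "v \<in> V" for u v
  proof -
    have rhs: "0 \<le> K3 * (\<Sum>b\<in>V. D u v * (?M u b * I u b) + D u v * (?M v b * I b v))"
      using K3pos Mnn Inn Dnn by (intro mult_nonneg_nonneg sum_nonneg add_nonneg_nonneg) auto
    show ?thesis
    proof (cases "?dC u v > ereal (h * s) \<and> D u v > 0")
      case False
      then have "(if ?dC u v > ereal (h * s) then D u v else 0) = 0" using Dnn[of u v]
        by auto
      then show ?thesis using rhs by simp
    next
      case True
      then have sepuv: "?dC u v > ereal (h * s)" and Dpos: "D u v > 0" by auto
      have "D v u > 0" using Dpos D_sym unfolding symmetric_demand_def by simp
      then have "gdist E src tgt (\<lambda>e. real (ell e)) u v \<le> ereal h"
        "gdist E src tgt (\<lambda>e. real (ell e)) v u \<le> ereal h"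
        using Dpos D_len unfolding h_length_demand_def by auto
      then have "gdistbar E src tgt (\<lambda>e. real (ell e)) u v \<le> ereal h + ereal h"
        unfolding gdistbar_def by (intro add_mono)
      then have db: "gdistbar E src tgt (\<lambda>e. real (ell e)) u v \<le> ereal (2 * h)" by simp
      have msum: "1 / K3 \<le> (\<Sum>b\<in>V. min (?M u b) (?M v b))"
        using M_sum[OF fin h_pos alpha uv db] unfolding K3_def .
      have eachb: "min (?M u b) (?M v b) \<le> ?M u b * I u b + ?M v b * I b v" for b
      proof (cases "?dC u b > ereal (h * s / 2)")
        case True
        then have "I u b = 1" unfolding I_def by simp
        then show ?thesis using Mnn[of v b] Inn[of b v] by (simp add: min.coboundedI1)
      next
        case False
        have "?dC b v > ereal (h * s / 2)"
        proof (rule ccontr)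
          assume "\<not> ?thesis"
          then have "?dC u b + ?dC b v \<le> ereal (h * s / 2) + ereal (h * s / 2)"
            using False by (intro add_mono) auto
          moreover have "?dC u v \<le> ?dC u b + ?dC b v" by (rule gdist_triangle[OF cutnn])
          ultimately have "?dC u v \<le> ereal (h * s)" by simp
          then show False using sepuv by simp
        qed
        then have "I b v = 1" unfolding I_def by simp
        then show ?thesis using Mnn[of u b] Inn[of u b] by (simp add: min.coboundedI2)
      qed
      have "1 / K3 \<le> (\<Sum>b\<in>V. ?M u b * I u b + ?M v b * I b v)"
      proof -
        have "(\<Sum>b\<in>V. min (?M u b) (?M v b)) \<le> (\<Sum>b\<in>V. ?M u b * I u b + ?M v b * I b v)"
          by (intro sum_mono eachb)
        then show ?thesis using msum by linarith
      qed
      then have "D u v * (1 / K3) \<le> D u v * (\<Sum>b\<in>V. ?M u b * I u b + ?M v b * I b v)"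
        using Dpos by (intro mult_left_mono) auto
      then have "D u v \<le> K3 * (D u v * (\<Sum>b\<in>V. ?M u b * I u b + ?M v b * I b v))"
        using K3pos by (simp add: field_simps)
      then show ?thesis using sepuv by (simp add: sum_distrib_left distrib_left)
    qed
  qed
  have SD_le: "SD \<le> K3 * (S1 + S2)"
  proof -
    have "SD = (\<Sum>u\<in>V. \<Sum>v\<in>V. if ?dC u v > ereal (h * s) then D u v else 0)"
      unfolding SD_def by (rule sep_alt[OF fin])
    also have "\<dots> \<le> (\<Sum>u\<in>V. \<Sum>v\<in>V. K3 * (\<Sum>b\<in>V. D u v * (?M u b * I u b) + D u v * (?M v b * I b v)))"
      by (intro sum_mono step1)
    also have "\<dots> = K3 * (S1 + S2)"
      unfolding S1_def S2_def by (simp only: sum_distrib_left[symmetric] sum.distrib distrib_left)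
    finally show ?thesis .
  qed
  have rowA: "(\<Sum>v\<in>V. D u v) \<le> A u" if "u \<in> V" for u
    using D_resp that unfolding A_respecting_def by auto
  have colA: "(\<Sum>u\<in>V. D u v) \<le> A v" if "v \<in> V" for v
    using D_resp that unfolding A_respecting_def by auto
  have S1_le: "S1 \<le> (\<Sum>u\<in>V. \<Sum>b\<in>V. A u * (?M u b * I u b))"
  proof -
    have "S1 = (\<Sum>u\<in>V. \<Sum>b\<in>V. (\<Sum>v\<in>V. D u v) * (?M u b * I u b))"
      unfolding S1_def sum_distrib_right by (rule sum.cong[OF refl], rule sum.swap)
    also have "\<dots> \<le> (\<Sum>u\<in>V. \<Sum>b\<in>V. A u * (?M u b * I u b))"
      using rowA Mnn Inn by (intro sum_mono mult_right_mono mult_nonneg_nonneg) auto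
    finally show ?thesis .
  qed
  have S2_le: "S2 \<le> (\<Sum>v\<in>V. \<Sum>b\<in>V. A v * (?M v b * I b v))"
  proof -
    have "S2 = (\<Sum>v\<in>V. \<Sum>u\<in>V. \<Sum>b\<in>V. D u v * (?M v b * I b v))"
      unfolding S2_def by (rule sum.swap)
    also have "\<dots> = (\<Sum>v\<in>V. \<Sum>b\<in>V. (\<Sum>u\<in>V. D u v) * (?M v b * I b v))"
      unfolding sum_distrib_right by (rule sum.cong[OF refl], rule sum.swap)
    also have "\<dots> \<le> (\<Sum>v\<in>V. \<Sum>b\<in>V. A v * (?M v b * I b v))"
      using colA Mnn Inn by (intro sum_mono mult_right_mono mult_nonneg_nonneg) auto
    finally show ?thesis .
  qed
  have SA_eq: "SA = (\<Sum>u\<in>V. \<Sum>b\<in>V. A u * (?M u b * I u b)) + (\<Sum>v\<in>V. \<Sum>b\<in>V. A v * (?M v b * I b v))"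
  proof -
    have "SA = (\<Sum>x\<in>V. \<Sum>y\<in>V. I x y * ?DA x y)"
      unfolding SA_def sep_alt[OF fin] I_def by (intro sum.cong refl) auto
    also have "\<dots> = (\<Sum>x\<in>V. \<Sum>y\<in>V. A x * (?M x y * I x y)) + (\<Sum>x\<in>V. \<Sum>y\<in>V. A y * (?M y x * I x y))"
      unfolding exp_demand_def by (simp add: algebra_simps sum.distrib)
    also have "(\<Sum>x\<in>V. \<Sum>y\<in>V. A y * (?M y x * I x y)) = (\<Sum>y\<in>V. \<Sum>x\<in>V. A y * (?M y x * I x y))"
      by (rule sum.swap)
    finally show ?thesis .
  qed
  have SD_SA: "SD \<le> K3 * SA"
  proof -
    have "S1 + S2 \<le> SA" using S1_le S2_le SA_eq by linarith
    then show ?thesis using SD_le K3pos by (smt (verit) mult_left_mono)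
  qed
  have SDnn: "0 \<le> SD" unfolding SD_def sep_def using Dnn by (intro sum_nonneg) auto
  have SD0: "SD \<noteq> 0" using spars_D unfolding spars_def SD_def[symmetric] by (auto simp: Let_def)
  then have SDpos: "SD > 0" using SDnn by simp
  have phi: "cut_size E cap C / SD \<le> \<phi>" using spars_D SD0 unfolding spars_def SD_def[symmetric]
    by (simp add: Let_def)
  have csnn: "0 \<le> cut_size E cap C" unfolding cut_size_def using C_cut
    unfolding moving_cut_def by (intro sum_nonneg mult_nonneg_nonneg) auto
  have SApos: "SA > 0" using SD_SA SDpos K3pos by (metis less_le_trans zero_less_mult_pos)
  have phinn: "0 \<le> \<phi>" using phi csnn SDpos by (smt (verit) divide_nonneg_pos)
  have "cut_size E cap C / SA \<le> K3 * (cut_size E cap C / SD)"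
  proof -
    have "cut_size E cap C * SD \<le> cut_size E cap C * (K3 * SA)" using SD_SA csnn by (intro mult_left_mono)
    then show ?thesis using SApos SDpos by (simp add: field_simps)
  qed
  also have "\<dots> \<le> K3 * \<phi>" using phi K3pos by (intro mult_left_mono) auto
  also have "K3 \<le> 2 powr (8 * \<alpha> + 1)"
  proof -
    have "((2::real) powr (2 * \<alpha>))^3 = 2 powr (of_nat 3 * (2 * \<alpha>))"
      by (rule powr_power) simp
    then have "K3 = 2 * 2 powr (6 * \<alpha>)" unfolding K3_def by simp
    also have "\<dots> = 2 powr (6 * \<alpha> + 1)" by (simp add: powr_add)
    finally have "K3 = 2 powr (6 * \<alpha> + 1)" .
    also have "\<dots> \<le> 2 powr (8 * \<alpha> + 1)" using alpha by (intro powr_mono) auto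
    finally show ?thesis .
  qed
  then have "K3 * \<phi> \<le> 2 powr (8 * \<alpha> + 1) * \<phi>" using phinn by (intro mult_right_mono)
  finally have fin_ineq: "cut_size E cap C / SA \<le> 2 powr (8 * \<alpha> + 1) * \<phi>" .
  show ?thesis unfolding spars_def SA_def[symmetric] using SApos fin_ineq by (simp add: Let_def)
qed

end
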